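(* Let $D$ be a digraph rooted at $r$, let $x \in V(D) \setminus \{r\}$, and let $\mathcal{S}$ be a non-empty collection of subsets of $V(D) \setminus \{r\}$ such that each $S \in \mathcal{S}$ separates $x$ from $r$. Let $\bigvee \mathcal{S}$ be the set of those elements $s \in \bigcup \mathcal{S}$ that are separated from $r$ by every $S \in \mathcal{S}$. Then $\bigvee \mathcal{S}$ separates $x$ from $r$.
   Context: A vertex set $S$ separates a vertex $y$ from $r$ if every directed path from $r$ to $y$ contains a vertex of $S$. *)

theory Defs
  imports Main
begin

text \<open>A digraph is given by a vertex set V and an arc relation E \<subseteq> V \<times> V
  (arbitrary, possibly infinite).\<close>

definition dpath :: "'a set \<Rightarrow> ('a \<times> 'a) set \<Rightarrow> 'a list \<Rightarrow> bool" where
  "dpath V E p \<longleftrightarrow> p \<noteq> [] \<and> distinct p \<and> set p \<subseteq> V \<and>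
     successively (\<lambda>u v. (u, v) \<in> E) p"

definition dpath_from_to :: "'a set \<Rightarrow> ('a \<times> 'a) set \<Rightarrow> 'a \<Rightarrow> 'a \<Rightarrow> 'a list \<Rightarrow> bool" where
  "dpath_from_to V E u v p \<longleftrightarrow> dpath V E p \<and> hd p = u \<and> last p = v"

definition rooted_digraph :: "'a set \<Rightarrow> ('a \<times> 'a) set \<Rightarrow> 'a \<Rightarrow> bool" where
  "rooted_digraph V E r \<longleftrightarrow> E \<subseteq> V \<times> V \<and> r \<in> V \<and>
     (\<forall>v\<in>V. \<exists>p. dpath_from_to V E r v p)"

definition separates :: "'a set \<Rightarrow> ('a \<times> 'a) set \<Rightarrow> 'a \<Rightarrow> 'a set \<Rightarrow> 'a \<Rightarrow> bool" where
  "separates V E r S y \<longleftrightarrow> (\<forall>p. dpath_from_to V E r y p \<longrightarrow> set p \<inter> S \<noteq> {})"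

definition sep_join :: "'a set \<Rightarrow> ('a \<times> 'a) set \<Rightarrow> 'a \<Rightarrow> 'a set set \<Rightarrow> 'a set" where
  "sep_join V E r \<S> = {s \<in> \<Union>\<S>. \<forall>S\<in>\<S>. separates V E r S s}"

end

theory Submission
  imports Defs
begin

lemma walk_to_path:
  "p \<noteq> [] \<Longrightarrow> successively R p \<Longrightarrow> \<exists>q. q \<noteq> [] \<and> distinct q \<and> set q \<subseteq> set p \<and>
     successively R q \<and> hd q = hd p \<and> last q = last p"
proof (induction p)
  case Nil
  then show ?case by simp
next
  case (Cons a p)
  show ?case
  proof (cases "p = []")
    case True
    then show ?thesis by (intro exI[of _ "[a]"]) auto
  next
    case False
    have sp: "successively R p" using Cons.prems
      using successively_Cons[of R a p] False by auto
    have ra: "R a (hd p)" using Cons.prems False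
      by (cases p) auto
    obtain q where q: "q \<noteq> []" "distinct q" "set q \<subseteq> set p" "successively R q"
      "hd q = hd p" "last q = last p" using Cons.IH[OF False sp] by blast
    show ?thesis
    proof (cases "a \<in> set q")
      case False
      have "successively R (a # q)" using q ra
        by (cases q) auto
      then show ?thesis using q False \<open>p \<noteq> []\<close> by (intro exI[of _ "a # q"]) auto
    next
      case True
      then obtain q1 q2 where qq: "q = q1 @ a # q2" by (meson split_list)
      have "successively R (a # q2)" using q(4) qq
        by (simp add: successively_append_iff)
      moreover have "last (a # q2) = last q" using qq by simp
      moreover have "distinct (a # q2)" using q(2) qq by simp
      moreover have "set (a # q2) \<subseteq> set (a # p)" using q(3) qq by auto
      ultimately show ?thesis using q \<open>p \<noteq> []\<close>
        by (intro exI[of _ "a # q2"]) auto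
    qed
  qed
qed

theorem lemma5p1:
  fixes V :: "'a set" and E :: "('a \<times> 'a) set" and r x :: 'a and \<S> :: "'a set set"
  assumes "rooted_digraph V E r"
    and "x \<in> V - {r}"
    and "\<S> \<noteq> {}"
    and "\<forall>S\<in>\<S>. S \<subseteq> V - {r}"
    and "\<forall>S\<in>\<S>. separates V E r S x"
  shows "separates V E r (sep_join V E r \<S>) x"
  unfolding separates_def
proof (intro allI impI)
  fix p assume pp: "dpath_from_to V E r x p"
  have pne: "p \<noteq> []" and pd: "distinct p" and pV: "set p \<subseteq> V"
    and ps: "successively (\<lambda>u v. (u, v) \<in> E) p" and ph: "hd p = r" and pl: "last p = x"
    using pp unfolding dpath_from_to_def dpath_def by auto
  define n where "n = length p"
  define L where "L S = Max {i. i < n \<and> p ! i \<in> S}" for S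
  have LS: "L S < n \<and> p ! L S \<in> S \<and> (\<forall>j. j < n \<and> p ! j \<in> S \<longrightarrow> j \<le> L S)"
    if "S \<in> \<S>" for S
  proof -
    have "set p \<inter> S \<noteq> {}" using assms(5) that pp unfolding separates_def by blast
    then obtain i where "i < n" "p ! i \<in> S" unfolding n_def by (metis disjoint_iff in_set_conv_nth)
    hence ne: "{i. i < n \<and> p ! i \<in> S} \<noteq> {}" by blast
    have fin: "finite {i. i < n \<and> p ! i \<in> S}" by simp
    show ?thesis using Max_in[OF fin ne] Max_ge[OF fin] unfolding L_def by auto
  qed
  define m where "m = Max (L ` \<S>)"
  have finL: "finite (L ` \<S>)"
    by (rule finite_subset[of _ "{..<n}"]) (use LS in auto)
  have "m \<in> L ` \<S>" unfolding m_def using finL assms(3) by (intro Max_in) auto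
  then obtain S0 where S0: "S0 \<in> \<S>" "L S0 = m" by auto
  have mge: "L S \<le> m" if "S \<in> \<S>" for S unfolding m_def using finL that by auto
  have mn: "m < n" using LS[OF S0(1)] S0 by simp
  define s where "s = p ! m"
  have sS0: "s \<in> S0" using LS[OF S0(1)] S0 s_def by simp
  have "s \<in> sep_join V E r \<S>"
    unfolding sep_join_def
  proof (intro CollectI conjI ballI)
    show "s \<in> \<Union>\<S>" using sS0 S0 by auto
  next
    fix S assume S: "S \<in> \<S>"
    show "separates V E r S s" unfolding separates_def
    proof (intro allI impI notI)
      fix q assume qq: "dpath_from_to V E r s q" and dis: "set q \<inter> S = {}"
      have qne: "q \<noteq> []" and qV: "set q \<subseteq> V"
        and qs: "successively (\<lambda>u v. (u, v) \<in> E) q" and qh: "hd q = r" and ql: "last q = s"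
        using qq unfolding dpath_from_to_def dpath_def by auto
      define t where "t = drop (Suc m) p"
      define w where "w = q @ t"
      have tS: "set t \<inter> S = {}"
      proof (rule ccontr)
        assume "set t \<inter> S \<noteq> {}"
        then obtain k where "k < length t" "t ! k \<in> S" by (metis disjoint_iff in_set_conv_nth)
        hence "Suc m + k < n" "p ! (Suc m + k) \<in> S" unfolding t_def n_def by auto
        hence "Suc m + k \<le> L S" using LS[OF S] by blast
        thus False using mge[OF S] by simp
      qed
      have wS: "set w \<inter> S = {}" using tS dis w_def by auto
      have ws: "successively (\<lambda>u v. (u, v) \<in> E) w"
      proof (cases "t = []")
        case True then show ?thesis using qs w_def by simp
      next
        case False
        have "Suc m < n" using False unfolding t_def n_def by simp
        have hdt: "hd t = p ! Suc m" using False unfolding t_def by (simp add: hd_drop_conv_nth)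
        have "successively (\<lambda>u v. (u, v) \<in> E) t" using ps unfolding t_def
          by (metis append_take_drop_id successively_append_iff)
        moreover have "(p ! m, p ! Suc m) \<in> E" using ps \<open>Suc m < n\<close> unfolding n_def
          by (simp add: successively_conv_nth)
        ultimately show ?thesis using qs qne False hdt ql s_def unfolding w_def
          by (simp add: successively_append_iff)
      qed
      have wne: "w \<noteq> []" using qne w_def by simp
      have wh: "hd w = r" using qne qh w_def by simp
      have wl: "last w = x"
      proof (cases "t = []")
        case True
        hence "Suc m \<ge> n" unfolding t_def n_def by simp
        hence "m = n - 1" using mn by simp
        hence "s = last p" using pne s_def n_def by (simp add: last_conv_nth)
        then show ?thesis using True w_def ql pl by simp
      next
        case False
        then have "last t = last p" unfolding t_def by simp
        then show ?thesis using False w_def pl by simp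
      qed
      have wV: "set w \<subseteq> V" using qV pV unfolding w_def t_def
        by (auto dest: in_set_dropD)
      obtain u where u: "u \<noteq> []" "distinct u" "set u \<subseteq> set w"
        "successively (\<lambda>u v. (u, v) \<in> E) u" "hd u = hd w" "last u = last w"
        using walk_to_path[OF wne ws] by blast
      have "dpath_from_to V E r x u" unfolding dpath_from_to_def dpath_def
        using u wV wh wl by auto
      hence "set u \<inter> S \<noteq> {}" using assms(5) S unfolding separates_def by blast
      thus False using u(3) wS by auto
    qed
  qed
  moreover have "s \<in> set p" using mn s_def n_def by simp
  ultimately show "set p \<inter> sep_join V E r \<S> \<noteq> {}" by blast
qed

end
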